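(* Let $\{(\lambda^\alpha_{i,j})_{i,j\in\mathbb{N}}:\alpha<\omega_1\}$ be a family of real matrices each of which satisfies: (i) $\lim_{i\to\infty}\lambda^\alpha_{i,j}=0$ for every $j\in\mathbb{N}$; (ii) $\sum_{j\in\mathbb{N}}|\lambda^\alpha_{i,j}|<\infty$ for every $i\in\mathbb{N}$; (iii) $\lim_{i\to\infty}\sum_{j\in\mathbb{N}}\lambda^\alpha_{i,j}=1$. Then there exists an almost disjoint family $\mathcal{F}$ such that for every $\alpha<\omega_1$ there is $N'_\alpha\in\mathcal{F}$ for which the sequence $\big(\sum_{j\in N'_\alpha}\lambda^\alpha_{i,j}\big)_{i\in\mathbb{N}}$ does not converge to $0$.
   Context: An almost disjoint family is an infinite family of pairwise almost disjoint infinite subsets of $\mathbb{N}$, where two sets are almost disjoint if their intersection is finite. $\omega_1$ is the first uncountable ordinal. *)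

theory Defs
  imports Complex_Main
begin

definition almost_disjoint_family :: "nat set set \<Rightarrow> bool" where
  "almost_disjoint_family F \<longleftrightarrow>
     infinite F \<and> (\<forall>A\<in>F. infinite A) \<and>
     (\<forall>A\<in>F. \<forall>B\<in>F. A \<noteq> B \<longrightarrow> finite (A \<inter> B))"

end

theory Submission
  imports Defs "HOL-Library.Countable_Set_Type" "HOL-Library.Nat_Bijection"
begin

unbundle cardinal_syntax

lemma omega1_order:
  assumes "(card_of (UNIV :: 'a set), cardSuc natLeq) \<in> ordLeq"
  shows "\<exists>R :: ('a \<times> 'a) set. wf R \<and> trans R \<and> (\<forall>x y. x \<noteq> y \<longrightarrow> (x,y) \<in> R \<or> (y,x) \<in> R)
            \<and> (\<forall>x. countable {y. (y,x) \<in> R})"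
proof -
  let ?r = "cardSuc natLeq"
  have co: "Card_order ?r" using cardSuc_Card_order natLeq_Card_order by blast
  have wo: "Well_order ?r" using co card_order_on_well_order_on by blast
  have "|UNIV :: 'a set| \<le>o |Field ?r|"
    using ordLeq_ordIso_trans[OF assms ordIso_symmetric[OF card_of_Field_ordIso[OF co]]] .
  then obtain f where inj: "inj_on f (UNIV :: 'a set)" and fr: "f ` UNIV \<subseteq> Field ?r"
    unfolding card_of_ordLeq[symmetric] by blast
  define R where "R = inv_image (?r - Id) f"
  have "wf R" unfolding R_def using wo_rel.WF[of ?r] wo wo_rel_def by (blast intro: wf_inv_image)
  moreover have "trans R"
  proof (rule transI)
    fix x y z assume "(x,y) \<in> R" "(y,z) \<in> R"
    then have "(f x, f y) \<in> ?r" "(f y, f z) \<in> ?r" "f x \<noteq> f y" "f y \<noteq> f z" by (auto simp: R_def)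
    moreover have "trans ?r" "antisym ?r" using wo wo_rel.TRANS wo_rel.ANTISYM wo_rel_def by blast+
    ultimately have "(f x, f z) \<in> ?r" "f x \<noteq> f z"
      by (metis transD, metis transD antisymD)
    then show "(x,z) \<in> R" unfolding R_def by simp
  qed
  moreover have "\<forall>x y. x \<noteq> y \<longrightarrow> (x,y) \<in> R \<or> (y,x) \<in> R"
  proof (intro allI impI)
    fix x y :: 'a assume "x \<noteq> y"
    then have "f x \<noteq> f y" using inj by (auto dest: inj_onD)
    moreover have "f x \<in> Field ?r" "f y \<in> Field ?r" using fr by auto
    ultimately show "(x,y) \<in> R \<or> (y,x) \<in> R"
      using wo_rel.TOTALS[of ?r] wo wo_rel_def by (auto simp: R_def)
  qed
  moreover have "\<forall>x. countable {y. (y,x) \<in> R}"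
  proof
    fix x
    have fx: "f x \<in> Field ?r" using fr by auto
    have "|underS ?r (f x)| <o ?r" using card_of_underS[OF co fx] .
    then have "|underS ?r (f x)| \<le>o natLeq"
      using cardSuc_ordLeq_ordLess[OF natLeq_Card_order card_of_Card_order] by blast
    then have c: "countable (underS ?r (f x))" using countable_card_le_natLeq by blast
    have "f ` {y. (y,x) \<in> R} \<subseteq> underS ?r (f x)" by (auto simp: R_def underS_def)
    then have "countable (f ` {y. (y,x) \<in> R})" using c countable_subset by blast
    then show "countable {y. (y,x) \<in> R}"
      using inj countable_image_inj_on inj_on_subset by blast
  qed
  ultimately show ?thesis by blast
qed



definition SS :: "(nat \<Rightarrow> nat \<Rightarrow> real) \<Rightarrow> nat set \<Rightarrow> nat \<Rightarrow> real" where
  "SS M A i = (\<Sum>j. if j \<in> A then M i j else 0)"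

lemma SS_summable:
  fixes M :: "nat \<Rightarrow> nat \<Rightarrow> real"
  assumes "summable (\<lambda>j. \<bar>M i j\<bar>)"
  shows "summable (\<lambda>j. if j \<in> A then M i j else 0)"
  by (rule summable_comparison_test'[where g="\<lambda>j. \<bar>M i j\<bar>" and N=0]) (auto simp: assms)

lemma SS_add:
  fixes M :: "nat \<Rightarrow> nat \<Rightarrow> real"
  assumes "summable (\<lambda>j. \<bar>M i j\<bar>)"
  shows "SS M A i + SS M B i = SS M (A \<union> B) i + SS M (A \<inter> B) i"
proof -
  have "SS M A i + SS M B i = (\<Sum>j. (if j \<in> A then M i j else 0) + (if j \<in> B then M i j else 0))"
    unfolding SS_def by (rule suminf_add[OF SS_summable[of M i, OF assms] SS_summable[of M i, OF assms]])
  also have "\<dots> = (\<Sum>j. (if j \<in> A \<union> B then M i j else 0) + (if j \<in> A \<inter> B then M i j else 0))"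
    by (rule arg_cong[where f=suminf]) auto
  also have "\<dots> = SS M (A \<union> B) i + SS M (A \<inter> B) i"
    unfolding SS_def by (rule suminf_add[OF SS_summable[of M i, OF assms] SS_summable[of M i, OF assms], symmetric])
  finally show ?thesis .
qed

lemma SS_finite:
  fixes M :: "nat \<Rightarrow> nat \<Rightarrow> real"
  assumes "finite A"
  shows "SS M A i = (\<Sum>j\<in>A. M i j)"
  unfolding SS_def by (subst suminf_finite[OF assms]) auto

lemma SS_empty [simp]: "SS M {} i = 0"
  unfolding SS_def by simp

lemma SS_UNIV: "SS M UNIV i = (\<Sum>j. M i j)"
  unfolding SS_def by simp

lemma SS_abs:
  fixes M :: "nat \<Rightarrow> nat \<Rightarrow> real"
  assumes "summable (\<lambda>j. \<bar>M i j\<bar>)"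
  shows "\<bar>SS M A i\<bar> \<le> SS (\<lambda>i j. \<bar>M i j\<bar>) A i"
proof -
  have s: "summable (\<lambda>j. \<bar>if j \<in> A then M i j else 0\<bar>)"
    by (rule summable_comparison_test'[where g="\<lambda>j. \<bar>M i j\<bar>" and N=0]) (auto simp: assms)
  have "\<bar>SS M A i\<bar> \<le> (\<Sum>j. \<bar>if j \<in> A then M i j else 0\<bar>)"
    unfolding SS_def using summable_rabs[OF s] by simp
  also have "\<dots> = SS (\<lambda>i j. \<bar>M i j\<bar>) A i"
    unfolding SS_def by (rule arg_cong[where f=suminf]) auto
  finally show ?thesis .
qed

lemma SS_mono_abs:
  fixes M :: "nat \<Rightarrow> nat \<Rightarrow> real"
  assumes "summable (\<lambda>j. \<bar>M i j\<bar>)" and "A \<subseteq> B"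
  shows "SS (\<lambda>i j. \<bar>M i j\<bar>) A i \<le> SS (\<lambda>i j. \<bar>M i j\<bar>) B i"
  unfolding SS_def
  apply (rule suminf_le)
  using assms SS_summable[of "\<lambda>i j. \<bar>M i j\<bar>"] by auto

lemma SS_finite_lim:
  fixes M :: "nat \<Rightarrow> nat \<Rightarrow> real"
  assumes "\<And>j. (\<lambda>i. M i j) \<longlonglongrightarrow> 0" and "finite A"
  shows "(\<lambda>i. SS M A i) \<longlonglongrightarrow> 0"
proof -
  have "(\<lambda>i. \<Sum>j\<in>A. M i j) \<longlonglongrightarrow> (\<Sum>j\<in>A. 0)"
    by (rule tendsto_sum) (use assms in auto)
  then show ?thesis by (simp add: SS_finite[OF assms(2)])
qed

lemma SS_lessThan_abs:
  fixes M :: "nat \<Rightarrow> nat \<Rightarrow> real"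
  shows "SS (\<lambda>i j. \<bar>M i j\<bar>) {..<b} i = (\<Sum>j<b. \<bar>M i j\<bar>)"
  by (simp add: SS_finite)

lemma SS_tail_small:
  fixes M :: "nat \<Rightarrow> nat \<Rightarrow> real"
  assumes "summable (\<lambda>j. \<bar>M i j\<bar>)" and "e > 0"
  shows "\<exists>b'>b. SS (\<lambda>i j. \<bar>M i j\<bar>) {b'..} i \<le> e"
proof -
  let ?A = "\<lambda>i j. \<bar>M i j\<bar>"
  have sA: "summable (\<lambda>j. \<bar>?A i j\<bar>)" using assms by simp
  have eq: "SS ?A {n..} i = (\<Sum>j. ?A i j) - (\<Sum>j<n. ?A i j)" for n
  proof -
    have "SS ?A {..<n} i + SS ?A {n..} i = SS ?A ({..<n} \<union> {n..}) i + SS ?A ({..<n} \<inter> {n..}) i"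
      by (rule SS_add[of ?A i, OF sA])
    also have "{..<n} \<union> {n..} = (UNIV :: nat set)" by auto
    also have "{..<n} \<inter> {n..} = ({} :: nat set)" by auto
    finally show ?thesis by (simp add: SS_UNIV SS_lessThan_abs)
  qed
  have "(\<lambda>n. (\<Sum>j. ?A i j) - (\<Sum>j<n. ?A i j)) \<longlonglongrightarrow> (\<Sum>j. ?A i j) - (\<Sum>j. ?A i j)"
    by (intro tendsto_diff tendsto_const summable_LIMSEQ assms)
  then have "(\<lambda>n. SS ?A {n..} i) \<longlonglongrightarrow> 0" by (simp add: eq)
  then have "eventually (\<lambda>n. SS ?A {n..} i < e) sequentially"
    using assms(2) by (auto dest: order_tendstoD)
  then obtain n0 where "\<forall>n\<ge>n0. SS ?A {n..} i < e" by (auto simp: eventually_sequentially)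
  then have "SS ?A {max n0 (Suc b)..} i < e" by simp
  then show ?thesis by (intro exI[of _ "max n0 (Suc b)"]) auto
qed



lemma SS_approx:
  fixes L :: "nat \<Rightarrow> nat \<Rightarrow> real"
  assumes ii: "summable (\<lambda>j. \<bar>L i j\<bar>)" and bb: "b \<le> b'"
  shows "\<bar>SS L A i - SS L (A \<inter> {b..<b'}) i\<bar> \<le> (\<Sum>j<b. \<bar>L i j\<bar>) + SS (\<lambda>i j. \<bar>L i j\<bar>) {b'..} i"
proof -
  let ?A = "\<lambda>i j. \<bar>L i j\<bar>"
  define X where "X = A \<inter> {..<b'}"
  define Y where "Y = A \<inter> {b'..}"
  define P where "P = A \<inter> {..<b}"
  define Q where "Q = A \<inter> {b..<b'}"
  have "SS L X i + SS L Y i = SS L (X \<union> Y) i + SS L (X \<inter> Y) i" by (rule SS_add[of L i, OF ii])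
  moreover have "X \<union> Y = A" "X \<inter> Y = {}" by (auto simp: X_def Y_def)
  ultimately have 1: "SS L X i + SS L Y i = SS L A i" by simp
  have "SS L P i + SS L Q i = SS L (P \<union> Q) i + SS L (P \<inter> Q) i" by (rule SS_add[of L i, OF ii])
  moreover have "P \<union> Q = X" "P \<inter> Q = {}" using bb by (auto simp: X_def P_def Q_def)
  ultimately have 2: "SS L P i + SS L Q i = SS L X i" by simp
  have "\<bar>SS L P i\<bar> \<le> SS ?A P i" by (rule SS_abs[of L i, OF ii])
  also have "\<dots> \<le> SS ?A {..<b} i" by (rule SS_mono_abs[of L i, OF ii]) (auto simp: P_def)
  also have "\<dots> = (\<Sum>j<b. \<bar>L i j\<bar>)" by (rule SS_lessThan_abs)
  finally have 3: "\<bar>SS L P i\<bar> \<le> (\<Sum>j<b. \<bar>L i j\<bar>)" .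
  have "\<bar>SS L Y i\<bar> \<le> SS ?A Y i" by (rule SS_abs[of L i, OF ii])
  also have "\<dots> \<le> SS ?A {b'..} i" by (rule SS_mono_abs[of L i, OF ii]) (auto simp: Y_def)
  finally have 4: "\<bar>SS L Y i\<bar> \<le> SS ?A {b'..} i" .
  show ?thesis using 1 2 3 4 unfolding Q_def[symmetric] by linarith
qed

lemma key:
  fixes L :: "nat \<Rightarrow> nat \<Rightarrow> real" and D :: "nat \<Rightarrow> nat set"
  assumes i: "\<And>j. (\<lambda>i. L i j) \<longlonglongrightarrow> 0" and ii: "\<And>i. summable (\<lambda>j. \<bar>L i j\<bar>)"
    and iii: "(\<lambda>i. \<Sum>j. L i j) \<longlonglongrightarrow> 1"
    and D: "\<And>k. (\<lambda>i. SS L (D k) i) \<longlonglongrightarrow> 0"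
    and Dmono: "\<And>k k'. k \<le> k' \<Longrightarrow> D k \<subseteq> D k'"
  shows "\<exists>N. (\<forall>k. finite (N \<inter> D k)) \<and> \<not> (\<lambda>i. SS L N i) \<longlonglongrightarrow> 0"
proof -
  let ?A = "\<lambda>i j. \<bar>L i j\<bar>"
  have cD: "(\<lambda>i. SS L (- D k) i) \<longlonglongrightarrow> 1" for k
  proof -
    have "SS L (D k) i + SS L (- D k) i = SS L (D k \<union> - D k) i + SS L (D k \<inter> - D k) i" for i
      by (rule SS_add[of L i, OF ii])
    then have h: "SS L (D k) i + SS L (- D k) i = (\<Sum>j. L i j)" for i
      by (simp add: SS_UNIV)
    have eq: "SS L (- D k) i = (\<Sum>j. L i j) - SS L (D k) i" for i
      using h[of i] by linarith
    have "(\<lambda>i. (\<Sum>j. L i j) - SS L (D k) i) \<longlonglongrightarrow> 1 - 0"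
      by (intro tendsto_diff iii D)
    then show ?thesis by (simp add: eq)
  qed
  have fin: "(\<lambda>i. \<Sum>j<b. \<bar>L i j\<bar>) \<longlonglongrightarrow> 0" for b
  proof -
    have "(\<lambda>i. \<Sum>j<b. \<bar>L i j\<bar>) \<longlonglongrightarrow> (\<Sum>j<b. 0)"
      by (intro tendsto_sum tendsto_rabs_zero i)
    then show ?thesis by simp
  qed
  have ex1: "\<exists>i\<ge>k. (\<Sum>j<b. \<bar>L i j\<bar>) \<le> 1/8 \<and> SS L (- D k) i \<ge> 3/4" for k b
  proof -
    have "eventually (\<lambda>i. (\<Sum>j<b. \<bar>L i j\<bar>) < 1/8) sequentially"
      using order_tendstoD(2)[OF fin[of b], of "1/8"] by simp
    moreover have "eventually (\<lambda>i. SS L (- D k) i > 3/4) sequentially"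
      using order_tendstoD(1)[OF cD[of k], of "3/4"] by simp
    moreover have "eventually (\<lambda>i. i \<ge> k) sequentially" by (rule eventually_ge_at_top)
    ultimately have "eventually (\<lambda>i. i \<ge> k \<and> (\<Sum>j<b. \<bar>L i j\<bar>) < 1/8 \<and> SS L (- D k) i > 3/4) sequentially"
      by eventually_elim auto
    then obtain n where "\<forall>i\<ge>n. i \<ge> k \<and> (\<Sum>j<b. \<bar>L i j\<bar>) < 1/8 \<and> SS L (- D k) i > 3/4"
      unfolding eventually_sequentially by blast
    then show ?thesis by (intro exI[of _ n]) auto
  qed
  have ex2: "\<exists>b'>b. SS ?A {b'..} i \<le> 1/8" for i b
    by (rule SS_tail_small[of L i, OF ii]) simp
  define ch where "ch k b = (SOME i. i \<ge> k \<and> (\<Sum>j<b. \<bar>L i j\<bar>) \<le> 1/8 \<and> SS L (- D k) i \<ge> 3/4)" for k b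
  have ch: "ch k b \<ge> k \<and> (\<Sum>j<b. \<bar>L (ch k b) j\<bar>) \<le> 1/8 \<and> SS L (- D k) (ch k b) \<ge> 3/4" for k b
    unfolding ch_def using someI_ex[OF ex1[of k b]] by simp
  define nb where "nb i b = (SOME b'. b' > b \<and> SS ?A {b'..} i \<le> 1/8)" for i b
  have nb: "nb i b > b \<and> SS ?A {nb i b..} i \<le> 1/8" for i b
    unfolding nb_def using someI_ex[OF ex2[of b i]] by simp
  define bs where "bs = rec_nat 0 (\<lambda>k b. nb (ch k b) b)"
  have bs0: "bs 0 = 0" by (simp add: bs_def)
  have bsS: "bs (Suc k) = nb (ch k (bs k)) (bs k)" for k by (simp add: bs_def)
  define ix where "ix k = ch k (bs k)" for k
  have smono: "strict_mono bs"
    unfolding strict_mono_Suc_iff by (simp add: bsS nb)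
  define N where "N = {j. \<exists>k. bs k \<le> j \<and> j < bs (Suc k) \<and> j \<notin> D k}"
  have uniq: "k = k'" if "bs k \<le> j" "j < bs (Suc k)" "bs k' \<le> j" "j < bs (Suc k')" for k k' j
  proof (rule ccontr)
    assume "k \<noteq> k'"
    then consider "Suc k \<le> k'" | "Suc k' \<le> k" by linarith
    then show False
    proof cases
      case 1 then have "bs (Suc k) \<le> bs k'" using smono strict_mono_less_eq by blast
      then show False using that by linarith
    next
      case 2 then have "bs (Suc k') \<le> bs k" using smono strict_mono_less_eq by blast
      then show False using that by linarith
    qed
  qed
  have mid: "N \<inter> {bs k..<bs (Suc k)} = - D k \<inter> {bs k..<bs (Suc k)}" for k
  proof
    show "N \<inter> {bs k..<bs (Suc k)} \<subseteq> - D k \<inter> {bs k..<bs (Suc k)}"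
    proof
      fix j assume "j \<in> N \<inter> {bs k..<bs (Suc k)}"
      then obtain k' where "bs k' \<le> j" "j < bs (Suc k')" "j \<notin> D k'" "bs k \<le> j" "j < bs (Suc k)"
        by (auto simp: N_def)
      moreover then have "k = k'" using uniq by blast
      ultimately show "j \<in> - D k \<inter> {bs k..<bs (Suc k)}" by auto
    qed
  qed (auto simp: N_def)
  have finD: "N \<inter> D m \<subseteq> {..<bs m}" for m
  proof
    fix j assume "j \<in> N \<inter> D m"
    then obtain k where k: "bs k \<le> j" "j < bs (Suc k)" "j \<notin> D k" "j \<in> D m" by (auto simp: N_def)
    have "\<not> m \<le> k" using Dmono k by blast
    then have "Suc k \<le> m" by simp
    then have "bs (Suc k) \<le> bs m" using smono strict_mono_less_eq by blast
    then show "j \<in> {..<bs m}" using k by simp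
  qed
  have big: "\<bar>SS L N (ix k)\<bar> \<ge> 1/4" for k
  proof -
    let ?i = "ix k" and ?b = "bs k" and ?b' = "bs (Suc k)"
    have bb: "?b \<le> ?b'" using smono by (simp add: strict_mono_less_eq)
    have h1: "(\<Sum>j<?b. \<bar>L ?i j\<bar>) \<le> 1/8" "SS L (- D k) ?i \<ge> 3/4"
      using ch[of k ?b] by (auto simp: ix_def)
    have h2: "SS ?A {?b'..} ?i \<le> 1/8" using nb[where i="?i" and b="?b"] by (simp add: bsS ix_def)
    have a1: "\<bar>SS L N ?i - SS L (N \<inter> {?b..<?b'}) ?i\<bar> \<le> (\<Sum>j<?b. \<bar>L ?i j\<bar>) + SS ?A {?b'..} ?i"
      by (rule SS_approx[of L ?i, OF ii bb])
    have a2: "\<bar>SS L (- D k) ?i - SS L (- D k \<inter> {?b..<?b'}) ?i\<bar> \<le> (\<Sum>j<?b. \<bar>L ?i j\<bar>) + SS ?A {?b'..} ?i"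
      by (rule SS_approx[of L ?i, OF ii bb])
    show ?thesis using a1 a2 h1 h2 mid[of k] by auto
  qed
  have ixk: "ix k \<ge> k" for k using ch[of k "bs k"] by (simp add: ix_def)
  have "\<not> (\<lambda>i. SS L N i) \<longlonglongrightarrow> 0"
  proof
    assume "(\<lambda>i. SS L N i) \<longlonglongrightarrow> 0"
    then have "eventually (\<lambda>i. \<bar>SS L N i\<bar> < 1/4) sequentially"
      using order_tendstoD(2)[OF tendsto_rabs_zero[OF \<open>(\<lambda>i. SS L N i) \<longlonglongrightarrow> 0\<close>], of "1/4"] by simp
    then obtain n where "\<forall>i\<ge>n. \<bar>SS L N i\<bar> < 1/4" unfolding eventually_sequentially by blast
    then have "\<bar>SS L N (ix n)\<bar> < 1/4" using ixk by blast
    then show False using big[of n] by linarith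
  qed
  moreover have "\<forall>k. finite (N \<inter> D k)" using finD finite_subset by blast
  ultimately show ?thesis by blast
qed



definition ADf :: "nat set set \<Rightarrow> bool" where
  "ADf C \<longleftrightarrow> (\<forall>A\<in>C. \<forall>B\<in>C. A \<noteq> B \<longrightarrow> finite (A \<inter> B))"

lemma union_lim:
  fixes L :: "nat \<Rightarrow> nat \<Rightarrow> real"
  assumes i: "\<And>j. (\<lambda>i. L i j) \<longlonglongrightarrow> 0" and ii: "\<And>i. summable (\<lambda>j. \<bar>L i j\<bar>)"
    and AD: "ADf C" and Z: "\<forall>A\<in>C. (\<lambda>i. SS L A i) \<longlonglongrightarrow> 0"
  shows "finite C' \<Longrightarrow> C' \<subseteq> C \<Longrightarrow> (\<lambda>i. SS L (\<Union>C') i) \<longlonglongrightarrow> 0"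
proof (induction C' rule: finite_induct)
  case empty
  then show ?case by simp
next
  case (insert M F)
  have MC: "M \<in> C" and FC: "F \<subseteq> C" using insert by auto
  have f1: "finite (\<Union>B\<in>F. M \<inter> B)"
  proof (rule finite_UN_I[OF insert(1)])
    fix B assume "B \<in> F"
    then have "B \<noteq> M" "B \<in> C" using insert FC by auto
    then show "finite (M \<inter> B)" using AD MC unfolding ADf_def by blast
  qed
  have e1: "M \<inter> \<Union>F = (\<Union>B\<in>F. M \<inter> B)" by auto
  have finI: "finite (M \<inter> \<Union>F)" unfolding e1 by (rule f1)
  have eq: "SS L (M \<union> \<Union>F) i = SS L M i + SS L (\<Union>F) i - SS L (M \<inter> \<Union>F) i" for i
    using SS_add[of L i M "\<Union>F", OF ii] by linarith
  have "(\<lambda>i. SS L M i + SS L (\<Union>F) i - SS L (M \<inter> \<Union>F) i) \<longlonglongrightarrow> 0 + 0 - 0"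
    by (intro tendsto_diff tendsto_add SS_finite_lim[OF i finI] insert(3) FC) (use Z MC in auto)
  then have "(\<lambda>i. SS L (M \<union> \<Union>F) i) \<longlonglongrightarrow> 0" by (simp add: eq)
  then show ?case by simp
qed

lemma key2:
  fixes L :: "nat \<Rightarrow> nat \<Rightarrow> real"
  assumes i: "\<And>j. (\<lambda>i. L i j) \<longlonglongrightarrow> 0" and ii: "\<And>i. summable (\<lambda>j. \<bar>L i j\<bar>)"
    and iii: "(\<lambda>i. \<Sum>j. L i j) \<longlonglongrightarrow> 1"
    and cC: "countable C" and AD: "ADf C" and Z: "\<forall>A\<in>C. (\<lambda>i. SS L A i) \<longlonglongrightarrow> 0"
  shows "\<exists>N. (\<forall>A\<in>C. finite (N \<inter> A)) \<and> \<not> (\<lambda>i. SS L N i) \<longlonglongrightarrow> 0"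
proof (cases "C = {}")
  case True
  have "(\<lambda>i. SS L UNIV i) \<longlonglongrightarrow> 1" using iii by (simp add: SS_UNIV)
  then have "\<not> (\<lambda>i. SS L UNIV i) \<longlonglongrightarrow> 0"
  proof (intro notI)
    assume "(\<lambda>i. SS L UNIV i) \<longlonglongrightarrow> 0" "(\<lambda>i. SS L UNIV i) \<longlonglongrightarrow> 1"
    then have "(0::real) = 1" by (rule LIMSEQ_unique)
    then show False by simp
  qed
  then show ?thesis using True by blast
next
  case False
  define e where "e = from_nat_into C"
  have re: "range e = C" unfolding e_def using range_from_nat_into[OF False cC] .
  define D where "D k = \<Union>(e ` {..k})" for k
  have DZ: "(\<lambda>i. SS L (D k) i) \<longlonglongrightarrow> 0" for k
    unfolding D_def by (rule union_lim[OF i ii AD Z]) (use re in auto)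
  have Dm: "D k \<subseteq> D k'" if "k \<le> k'" for k k'
    unfolding D_def by (rule Union_mono, rule image_mono) (use that in auto)
  have "\<exists>N. (\<forall>k. finite (N \<inter> D k)) \<and> \<not> (\<lambda>i. SS L N i) \<longlonglongrightarrow> 0"
    by (rule key[where L=L and D=D, OF i ii iii DZ]) (rule Dm)
  then obtain N where N: "\<forall>k. finite (N \<inter> D k)" "\<not> (\<lambda>i. SS L N i) \<longlonglongrightarrow> 0"
    by (elim exE conjE)
  have "finite (N \<inter> A)" if AC: "A \<in> C" for A
  proof -
    obtain m where "A = e m" using re AC by blast
    then have "N \<inter> A \<subseteq> N \<inter> D m" by (auto simp: D_def)
    then show ?thesis using N(1) finite_subset by blast
  qed
  then show ?thesis using N(2) by blast
qed

lemma works_infinite: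
  fixes L :: "nat \<Rightarrow> nat \<Rightarrow> real"
  assumes i: "\<And>j. (\<lambda>i. L i j) \<longlonglongrightarrow> 0" and "\<not> (\<lambda>i. SS L N i) \<longlonglongrightarrow> 0"
  shows "infinite N"
proof
  assume "finite N"
  then show False using SS_finite_lim[OF i, of N] assms(2) by simp
qed

lemma ad_union:
  assumes "ADf C0" and "\<forall>y\<in>S. ADf (C0 \<union> g ` ({z. (z,y)\<in>R} \<union> {y}))"
    and lin: "\<forall>y1 y2. y1 \<noteq> y2 \<longrightarrow> (y1,y2)\<in>R \<or> (y2,y1)\<in>R"
  shows "ADf (C0 \<union> g ` S)"
  unfolding ADf_def
proof (intro ballI impI)
  fix A B assume A: "A \<in> C0 \<union> g ` S" and B: "B \<in> C0 \<union> g ` S" and AB: "A \<noteq> B"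
  have fam: "X \<in> C0 \<union> g ` ({z. (z,y)\<in>R} \<union> {y})" if "X \<in> C0 \<or> X = g y" for X y
    using that by blast
  have cA: "A \<in> C0 \<or> (\<exists>y\<in>S. A = g y)" using A by blast
  have cB: "B \<in> C0 \<or> (\<exists>y\<in>S. B = g y)" using B by blast
  from cA show "finite (A \<inter> B)"
  proof (elim disjE bexE)
    assume "A \<in> C0"
    from cB show ?thesis
    proof (elim disjE bexE)
      assume "B \<in> C0" then show ?thesis using assms(1) AB \<open>A \<in> C0\<close> unfolding ADf_def by blast
    next
      fix y assume "y \<in> S" "B = g y"
      then show ?thesis using assms(2) fam[of A y] fam[of B y] AB \<open>A \<in> C0\<close> unfolding ADf_def by blast
    qed
  next
    fix y1 assume y1: "y1 \<in> S" "A = g y1"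
    from cB show ?thesis
    proof (elim disjE bexE)
      assume "B \<in> C0" then show ?thesis using assms(2) fam[of A y1] fam[of B y1] AB y1 unfolding ADf_def by blast
    next
      fix y2 assume y2: "y2 \<in> S" "B = g y2"
      then have "y1 \<noteq> y2" using AB y1 by blast
      then consider "(y1,y2) \<in> R" | "(y2,y1) \<in> R" using lin by blast
      then show ?thesis
      proof cases
        case 1
        then have "A \<in> C0 \<union> g ` ({z. (z,y2)\<in>R} \<union> {y2})" "B \<in> C0 \<union> g ` ({z. (z,y2)\<in>R} \<union> {y2})"
          using y1 y2 by auto
        then show ?thesis using assms(2) y2(1) AB unfolding ADf_def by blast
      next
        case 2
        then have "A \<in> C0 \<union> g ` ({z. (z,y1)\<in>R} \<union> {y1})" "B \<in> C0 \<union> g ` ({z. (z,y1)\<in>R} \<union> {y1})"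
          using y1 y2 by auto
        then show ?thesis using assms(2) y1(1) AB unfolding ADf_def by blast
      qed
    qed
  qed
qed



theorem lemma4p12:
  fixes lam :: "'a \<Rightarrow> nat \<Rightarrow> nat \<Rightarrow> real"
  assumes omega1: "(card_of (UNIV :: 'a set), cardSuc natLeq) \<in> ordLeq"
    and i: "\<And>\<alpha> j. (\<lambda>i. lam \<alpha> i j) \<longlonglongrightarrow> 0"
    and ii: "\<And>\<alpha> i. summable (\<lambda>j. \<bar>lam \<alpha> i j\<bar>)"
    and iii: "\<And>\<alpha>. (\<lambda>i. \<Sum>j. lam \<alpha> i j) \<longlonglongrightarrow> 1"
  shows "\<exists>F. almost_disjoint_family F \<and>
           (\<forall>\<alpha>. \<exists>N\<in>F. \<not> ((\<lambda>i. \<Sum>j. if j \<in> N then lam \<alpha> i j else 0) \<longlonglongrightarrow> 0))"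
proof -
  obtain R :: "('a \<times> 'a) set" where wfR: "wf R"
    and lin: "\<forall>x y. x \<noteq> y \<longrightarrow> (x,y)\<in>R \<or> (y,x)\<in>R" and cntR: "\<forall>x. countable {y. (y,x)\<in>R}"
    using omega1_order[OF omega1] by blast
  define W where "W x N \<longleftrightarrow> \<not> (\<lambda>i. SS (lam x) N i) \<longlonglongrightarrow> 0" for x N
  define A where "A n = range (\<lambda>m. prod_encode (n,m))" for n
  define C0 where "C0 = range A"
  have Ainj: "inj A"
  proof (rule injI)
    fix n n' assume "A n = A n'"
    then have "prod_encode (n,0) \<in> A n'" by (auto simp: A_def)
    then obtain m where "prod_encode (n,0) = prod_encode (n',m)" by (auto simp: A_def)
    then show "n = n'" using inj_prod_encode[of UNIV] by (auto dest: injD)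
  qed
  have C0inf: "infinite C0" unfolding C0_def using range_inj_infinite[OF Ainj] .
  have C0ad: "ADf C0" unfolding ADf_def C0_def
  proof (intro ballI impI)
    fix X Y assume "X \<in> range A" "Y \<in> range A" "X \<noteq> Y"
    then obtain n n' where "X = A n" "Y = A n'" "n \<noteq> n'" by auto
    then have "X \<inter> Y = {}" using inj_prod_encode[of UNIV] by (auto simp: A_def dest: injD)
    then show "finite (X \<inter> Y)" by simp
  qed
  have C0mem: "\<forall>M\<in>C0. infinite M"
  proof
    fix M assume "M \<in> C0"
    then obtain n where "M = A n" by (auto simp: C0_def)
    moreover have "inj (\<lambda>m. prod_encode (n,m))"
      using inj_prod_encode[of UNIV] by (auto intro!: injI dest: injD)
    ultimately show "infinite M" unfolding A_def using range_inj_infinite by blast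
  qed
  have C0cnt: "countable C0" by (simp add: C0_def)
  define P where "P x = {y. (y,x)\<in>R}" for x
  define G where "G h x = (let C = C0 \<union> h ` P x in if \<exists>M\<in>C. W x M then (SOME M. M\<in>C \<and> W x M)
      else (SOME N. (\<forall>M\<in>C. finite (N \<inter> M)) \<and> W x N))" for h :: "'a \<Rightarrow> nat set" and x
  define g where "g = wfrec R G"
  have geq: "g x = (let C = C0 \<union> g ` P x in if \<exists>M\<in>C. W x M then (SOME M. M\<in>C \<and> W x M)
      else (SOME N. (\<forall>M\<in>C. finite (N \<inter> M)) \<and> W x N))" for x
  proof -
    have "g x = G (cut g R x) x" unfolding g_def by (rule wfrec[OF wfR])
    moreover have "cut g R x ` P x = g ` P x" by (auto simp: P_def cut_apply)
    ultimately show ?thesis by (simp add: G_def)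
  qed
  have step: "W x (g x) \<and> ADf (C0 \<union> g ` (P x \<union> {x}))" for x
  using wfR proof (induction x rule: wf_induct_rule)
    case (less x)
    let ?C = "C0 \<union> g ` P x"
    have adC: "ADf ?C"
      by (rule ad_union[of C0 "P x" g R, OF C0ad _ lin]) (use less in \<open>auto simp: P_def\<close>)
    have cC: "countable ?C" using C0cnt cntR by (auto simp: P_def)
    show ?case
    proof (cases "\<exists>M\<in>?C. W x M")
      case True
      then have ex: "\<exists>M. M \<in> ?C \<and> W x M" by blast
      have gx: "g x \<in> ?C \<and> W x (g x)"
        using geq[of x] True someI_ex[OF ex] by (simp add: Let_def)
      then have "C0 \<union> g ` (P x \<union> {x}) = ?C" by auto
      then show ?thesis using gx adC by simp
    next
      case False
      then have Z: "\<forall>M\<in>?C. (\<lambda>i. SS (lam x) M i) \<longlonglongrightarrow> 0" by (simp add: W_def)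
      have ex: "\<exists>N. (\<forall>M\<in>?C. finite (N \<inter> M)) \<and> W x N"
        using key2[where L="lam x" and C="?C", OF i[of x] ii[of x] iii[of x] cC adC Z] unfolding W_def .
      have gx: "(\<forall>M\<in>?C. finite (g x \<inter> M)) \<and> W x (g x)"
        using geq[of x] False someI_ex[OF ex] by (simp add: Let_def)
      have "ADf (insert (g x) ?C)" unfolding ADf_def
      proof (intro ballI impI)
        fix X Y assume X: "X \<in> insert (g x) ?C" and Y: "Y \<in> insert (g x) ?C" and XY: "X \<noteq> Y"
        show "finite (X \<inter> Y)"
        proof (cases "X = g x")
          case True
          then show ?thesis using gx Y XY by auto
        next
          case False
          note XF = False
          show ?thesis
          proof (cases "Y = g x")
            case True
            then have "finite (g x \<inter> X)" using gx X XF by auto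
            then show ?thesis using True by (simp add: Int_commute)
          next
            case False
            then show ?thesis using X Y XY XF adC unfolding ADf_def by auto
          qed
        qed
      qed
      moreover have "C0 \<union> g ` (P x \<union> {x}) = insert (g x) ?C" by auto
      ultimately show ?thesis using gx by simp
    qed
  qed
  define F where "F = C0 \<union> range g"
  have adF: "ADf F" unfolding F_def
    by (rule ad_union[of C0 UNIV g R, OF C0ad _ lin]) (use step in \<open>auto simp: P_def\<close>)
  have infM: "\<forall>M\<in>F. infinite M"
  proof
    fix M assume "M \<in> F"
    then consider "M \<in> C0" | x where "M = g x" by (auto simp: F_def)
    then show "infinite M"
    proof cases
      case 1 then show ?thesis using C0mem by blast
    next
      case 2
      have "W x (g x)" using step by blast
      then show ?thesis unfolding 2 W_def by (rule works_infinite[OF i])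
    qed
  qed
  have "infinite F" using C0inf by (auto simp: F_def dest: finite_subset[rotated])
  then have "almost_disjoint_family F"
    using adF infM unfolding almost_disjoint_family_def ADf_def by blast
  moreover have "\<forall>\<alpha>. \<exists>N\<in>F. \<not> ((\<lambda>i. \<Sum>j. if j \<in> N then lam \<alpha> i j else 0) \<longlonglongrightarrow> 0)"
  proof
    fix \<alpha>
    have "W \<alpha> (g \<alpha>)" using step by blast
    then have "\<not> ((\<lambda>i. \<Sum>j. if j \<in> g \<alpha> then lam \<alpha> i j else 0) \<longlonglongrightarrow> 0)"
      by (simp add: W_def SS_def)
    moreover have "g \<alpha> \<in> F" by (simp add: F_def)
    ultimately show "\<exists>N\<in>F. \<not> ((\<lambda>i. \<Sum>j. if j \<in> N then lam \<alpha> i j else 0) \<longlonglongrightarrow> 0)" by blast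
  qed
  ultimately show ?thesis by blast
qed

end
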